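(* Let $0 \le m < n$, let $L$ be an $m$-dimensional affine subspace of $\mathbb{R}^n$, and let $\varepsilon > 0$. Then there exists an embedding $\psi\colon \mathbb{R}^n \setminus L \to \mathbb{R}^n \setminus L$ such that (1) $\psi^{-1}\colon \psi(\mathbb{R}^n\setminus L) \to \mathbb{R}^n \setminus L$ is uniformly continuous; (2) $|\psi(x) - x| < \varepsilon$ for all $x \in \mathbb{R}^n \setminus L$; (3) the closure of $\psi(\mathbb{R}^n \setminus L)$ in $\mathbb{R}^n$ is disjoint from $L$. *)

theory Defs
  imports "HOL-Analysis.Analysis"
begin

end

theory Submission
  imports Defs
begin

lemma cp_ray:
  fixes L :: "'a::euclidean_space set"
  assumes aff: "affine L" and ne: "L \<noteq> {}" and s: "s \<ge> 0"
  shows "closest_point L (closest_point L x + s *\<^sub>R (x - closest_point L x)) = closest_point L x"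
proof -
  let ?c = "closest_point L x"
  have cl: "closed L" using aff affine_closed by blast
  have cv: "convex L" using aff affine_imp_convex by blast
  have cL: "?c \<in> L" using closest_point_in_set[OF cl ne] .
  have orth: "inner (x - ?c) (z - ?c) = 0" if z: "z \<in> L" for z
  proof -
    have "inner (x - ?c) (z - ?c) \<le> 0" using closest_point_dot[OF cv cl z] .
    moreover have "(1 - 2) *\<^sub>R z + 2 *\<^sub>R ?c \<in> L"
      using aff[unfolded affine_alt] z cL by blast
    then have "inner (x - ?c) (((1 - 2) *\<^sub>R z + 2 *\<^sub>R ?c) - ?c) \<le> 0"
      using closest_point_dot[OF cv cl] by blast
    then have "inner (x - ?c) (?c - z) \<le> 0"
      by (simp add: algebra_simps)
    then have "- inner (x - ?c) (z - ?c) \<le> 0"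
      by (metis inner_minus_right minus_diff_eq)
    ultimately show ?thesis by linarith
  qed
  let ?y = "?c + s *\<^sub>R (x - ?c)"
  have "\<forall>z\<in>L. dist ?y ?c \<le> dist ?y z"
  proof
    fix z assume z: "z \<in> L"
    have o: "inner (x - ?c) (?c - z) = 0" using orth[OF z]
      by (metis inner_minus_right minus_diff_eq neg_equal_0_iff_equal)
    have "(dist ?y z)^2 = (norm (s *\<^sub>R (x - ?c) + (?c - z)))^2"
      by (simp add: dist_norm algebra_simps)
    also have "\<dots> = (norm (s *\<^sub>R (x - ?c)))^2 + (norm (?c - z))^2"
      apply (rule norm_add_Pythagorean) unfolding orthogonal_def inner_scaleR_left o by simp
    also have "\<dots> \<ge> (norm (s *\<^sub>R (x - ?c)))^2" by simp
    finally have "(dist ?y ?c)^2 \<le> (dist ?y z)^2" by (simp add: dist_norm)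
    then show "dist ?y ?c \<le> dist ?y z"
      by (rule power2_le_imp_le) simp_all
  qed
  then show ?thesis using closest_point_unique[OF cv cl cL] by metis
qed

theorem mainTheorem5:
  fixes L :: "'a::euclidean_space set" and m :: nat and \<epsilon> :: real
  assumes "m < DIM('a)"
    and "affine L" and "aff_dim L = int m"
    and "\<epsilon> > 0"
  shows "\<exists>\<psi> \<psi>'. homeomorphism (- L) (\<psi> ` (- L)) \<psi> \<psi>'
           \<and> \<psi> ` (- L) \<subseteq> - L
           \<and> uniformly_continuous_on (\<psi> ` (- L)) \<psi>'
           \<and> (\<forall>x \<in> - L. norm (\<psi> x - x) < \<epsilon>)
           \<and> closure (\<psi> ` (- L)) \<inter> L = {}"
proof -
  have aff: "affine L" by fact
  have ne: "L \<noteq> {}" using assms(3) aff_dim_empty by fastforce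
  have cl: "closed L" using aff affine_closed by blast
  have cv: "convex L" using aff affine_imp_convex by blast
  define c where "c = closest_point L"
  define u where "u x = x - c x" for x
  define d where "d x = norm (u x)" for x
  define \<delta> where "\<delta> = \<epsilon> / 2"
  have dpos: "\<delta> > 0" using assms(4) by (simp add: \<delta>_def)
  define \<psi> where "\<psi> x = x + (\<delta> / d x) *\<^sub>R u x" for x
  define \<psi>' where "\<psi>' y = y - (\<delta> / d y) *\<^sub>R u y" for y
  define T where "T = {y. d y > \<delta>}"
  have cont_c: "continuous_on S c" for S
    unfolding c_def using continuous_on_closest_point[OF cv cl ne] .
  have cont_u: "continuous_on S u" for S
    unfolding u_def[abs_def] by (intro continuous_intros cont_c)
  have cont_d: "continuous_on S d" for S
    unfolding d_def[abs_def] by (intro continuous_intros cont_u)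
  have dL: "d x > 0 \<longleftrightarrow> x \<notin> L" for x
    using closest_point_refl[OF cl ne, of x] by (auto simp: d_def u_def c_def)
  have ray: "c (c x + s *\<^sub>R u x) = c x" if "s \<ge> 0" for x s
    using cp_ray[OF aff ne that] by (simp add: c_def u_def)
  have psi_ray: "\<psi> x = c x + (1 + \<delta> / d x) *\<^sub>R u x" for x
    by (simp add: \<psi>_def u_def algebra_simps)
  have c_psi: "c (\<psi> x) = c x" if "x \<notin> L" for x
    using ray[of "1 + \<delta> / d x" x] dL[of x] that dpos psi_ray by simp
  have u_psi: "u (\<psi> x) = (1 + \<delta> / d x) *\<^sub>R u x" if "x \<notin> L" for x
    using c_psi[OF that] psi_ray[of x] by (simp add: u_def)
  have d_psi: "d (\<psi> x) = d x + \<delta>" if "x \<notin> L" for x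
  proof -
    have "d x > 0" using dL that by blast
    then have "d (\<psi> x) = (1 + \<delta> / d x) * d x"
      using u_psi[OF that] dpos by (simp add: d_def)
    also have "\<dots> = d x + \<delta>" using \<open>d x > 0\<close> by (simp add: field_simps)
    finally show ?thesis .
  qed
  have psi'_ray: "\<psi>' y = c y + (1 - \<delta> / d y) *\<^sub>R u y" for y
    by (simp add: \<psi>'_def u_def algebra_simps)
  have c_psi': "c (\<psi>' y) = c y" if "y \<in> T" for y
  proof -
    have "d y > \<delta>" using that by (simp add: T_def)
    then have "1 - \<delta> / d y \<ge> 0" using dpos by (simp add: field_simps)
    then show ?thesis using ray psi'_ray by simp
  qed
  have u_psi': "u (\<psi>' y) = (1 - \<delta> / d y) *\<^sub>R u y" if "y \<in> T" for y
    using c_psi'[OF that] psi'_ray[of y] by (simp add: u_def)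
  have d_psi': "d (\<psi>' y) = d y - \<delta>" if "y \<in> T" for y
  proof -
    have "d y > \<delta>" using that by (simp add: T_def)
    then have "1 - \<delta> / d y \<ge> 0" using dpos by (simp add: field_simps)
    then have "d (\<psi>' y) = (1 - \<delta> / d y) * d y"
      using u_psi'[OF that] by (simp add: d_def)
    also have "\<dots> = d y - \<delta>" using \<open>d y > \<delta>\<close> dpos by (simp add: field_simps)
    finally show ?thesis .
  qed
  have inv1: "\<psi>' (\<psi> x) = x" if "x \<notin> L" for x
  proof -
    have "d x > 0" using dL that by blast
    have "\<psi>' (\<psi> x) = \<psi> x - (\<delta> / (d x + \<delta>) * (1 + \<delta> / d x)) *\<^sub>R u x"
      using d_psi[OF that] u_psi[OF that] by (simp add: \<psi>'_def)
    also have "\<delta> / (d x + \<delta>) * (1 + \<delta> / d x) = \<delta> / d x"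
    proof -
      have "1 + \<delta> / d x = (d x + \<delta>) / d x" using \<open>d x > 0\<close> by (simp add: add_divide_distrib)
      moreover have "d x + \<delta> \<noteq> 0" using \<open>d x > 0\<close> dpos by simp
      moreover have "d x \<noteq> 0" using \<open>d x > 0\<close> by simp
      ultimately show ?thesis by simp
    qed
    finally show ?thesis by (simp add: \<psi>_def)
  qed
  have inv2: "\<psi> (\<psi>' y) = y" if "y \<in> T" for y
  proof -
    have "d y > \<delta>" using that by (simp add: T_def)
    have nz: "d y - \<delta> \<noteq> 0" using \<open>d y > \<delta>\<close> by simp
    have "\<psi> (\<psi>' y) = \<psi>' y + (\<delta> / (d y - \<delta>) * (1 - \<delta> / d y)) *\<^sub>R u y"
      using d_psi'[OF that] u_psi'[OF that] by (simp add: \<psi>_def)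
    also have "\<delta> / (d y - \<delta>) * (1 - \<delta> / d y) = \<delta> / d y"
      using \<open>d y > \<delta>\<close> dpos nz by (simp add: field_simps)
    finally show ?thesis by (simp add: \<psi>'_def)
  qed
  have psiT: "\<psi> x \<in> T" if "x \<notin> L" for x
    using d_psi[OF that] dL[of x] that by (simp add: T_def)
  have psi'L: "\<psi>' y \<notin> L" if "y \<in> T" for y
    using d_psi'[OF that] dL[of "\<psi>' y"] that by (simp add: T_def)
  have img: "\<psi> ` (- L) = T"
  proof
    show "\<psi> ` (- L) \<subseteq> T" using psiT by auto
    show "T \<subseteq> \<psi> ` (- L)"
    proof
      fix y assume "y \<in> T"
      then show "y \<in> \<psi> ` (- L)" using inv2 psi'L by (metis ComplI imageI)
    qed
  qed
  have img': "\<psi>' ` T = - L"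
  proof
    show "\<psi>' ` T \<subseteq> - L" using psi'L by auto
    show "- L \<subseteq> \<psi>' ` T"
    proof
      fix x assume "x \<in> - L"
      then show "x \<in> \<psi>' ` T" using inv1 psiT by (metis ComplD imageI)
    qed
  qed
  have contpsi: "continuous_on (- L) \<psi>"
    unfolding \<psi>_def[abs_def]
    by (intro continuous_intros cont_u cont_d) (use dL in force)
  have contpsi': "continuous_on T \<psi>'"
    unfolding \<psi>'_def[abs_def]
    by (intro continuous_intros cont_u cont_d) (use dpos in \<open>auto simp: T_def\<close>)
  have homeo: "homeomorphism (- L) T \<psi> \<psi>'"
    unfolding homeomorphism_def using img img' contpsi contpsi' inv1 inv2 by auto
  have unorm: "norm (a /\<^sub>R norm a - b /\<^sub>R norm b) \<le> 2 * norm (a - b) / norm a"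
    if "a \<noteq> 0" "b \<noteq> 0" for a b :: 'a
  proof -
    have na: "norm a > 0" "norm b > 0" using that by auto
    have eq: "a /\<^sub>R norm a - b /\<^sub>R norm b = (a - b) /\<^sub>R norm a + ((norm b - norm a) / (norm a * norm b)) *\<^sub>R b"
    proof -
      have sc: "1 / norm a - (norm b - norm a) / (norm a * norm b) = 1 / norm b"
        using na by (simp add: field_simps)
      have "(a - b) /\<^sub>R norm a + ((norm b - norm a) / (norm a * norm b)) *\<^sub>R b
          = a /\<^sub>R norm a - (1 / norm a - (norm b - norm a) / (norm a * norm b)) *\<^sub>R b"
        by (simp add: algebra_simps inverse_eq_divide)
      also have "\<dots> = a /\<^sub>R norm a - b /\<^sub>R norm b" unfolding sc by (simp add: inverse_eq_divide)
      finally show ?thesis by simp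
    qed
    have "norm (((norm b - norm a) / (norm a * norm b)) *\<^sub>R b) = \<bar>norm b - norm a\<bar> / norm a"
      using na by (simp add: abs_divide abs_mult)
    also have "\<dots> \<le> norm (a - b) / norm a"
      using na norm_triangle_ineq3[of b a] norm_minus_commute[of a b] by (intro divide_right_mono) auto
    finally have h: "norm (((norm b - norm a) / (norm a * norm b)) *\<^sub>R b) \<le> norm (a - b) / norm a" .
    have "norm (a /\<^sub>R norm a - b /\<^sub>R norm b) \<le> norm ((a - b) /\<^sub>R norm a) + norm (((norm b - norm a) / (norm a * norm b)) *\<^sub>R b)"
      unfolding eq by (rule norm_triangle_ineq)
    also have "norm ((a - b) /\<^sub>R norm a) = norm (a - b) / norm a" using na by (simp add: inverse_eq_divide)
    finally show ?thesis using h by simp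
  qed
  have ulip: "norm (u y - u z) \<le> 2 * dist y z" for y z
  proof -
    have "norm (u y - u z) = norm ((y - z) - (c y - c z))" by (simp add: u_def algebra_simps)
    also have "\<dots> \<le> norm (y - z) + norm (c y - c z)" by (rule norm_triangle_ineq4)
    also have "norm (c y - c z) \<le> dist y z"
      using closest_point_lipschitz[OF cv cl ne] by (simp add: c_def dist_norm)
    finally show ?thesis by (simp add: dist_norm)
  qed
  have lip: "(5::real)-lipschitz_on T \<psi>'"
  proof (rule lipschitz_onI)
    fix y z assume y: "y \<in> T" and z: "z \<in> T"
    have dy: "d y > \<delta>" "d z > \<delta>" using y z by (auto simp: T_def)
    have nz: "u y \<noteq> 0" "u z \<noteq> 0" using dy dpos by (auto simp: d_def)
    have "\<psi>' y - \<psi>' z = (y - z) - \<delta> *\<^sub>R (u y /\<^sub>R norm (u y) - u z /\<^sub>R norm (u z))"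
      by (simp add: \<psi>'_def d_def algebra_simps inverse_eq_divide)
    then have "dist (\<psi>' y) (\<psi>' z) \<le> norm (y - z) + \<delta> * norm (u y /\<^sub>R norm (u y) - u z /\<^sub>R norm (u z))"
      using dpos by (metis dist_norm norm_triangle_ineq4 norm_scaleR abs_of_pos)
    also have "norm (u y /\<^sub>R norm (u y) - u z /\<^sub>R norm (u z)) \<le> 2 * norm (u y - u z) / norm (u y)"
      using unorm nz by blast
    also have "\<dots> \<le> 2 * (2 * dist y z) / \<delta>"
      using ulip[of y z] dy dpos by (intro frac_le) (auto simp: d_def)
    finally have "dist (\<psi>' y) (\<psi>' z) \<le> dist y z + \<delta> * (2 * (2 * dist y z) / \<delta>)"
      using dpos by (simp add: dist_norm mult_left_mono)
    also have "\<dots> = 5 * dist y z" using dpos by (simp add: field_simps)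
    finally show "dist (\<psi>' y) (\<psi>' z) \<le> 5 * dist y z" .
  next
    show "0 \<le> (5::real)" by simp
  qed
  have uc: "uniformly_continuous_on T \<psi>'" by (rule lipschitz_on_uniformly_continuous[OF lip])
  have close: "norm (\<psi> x - x) < \<epsilon>" if "x \<in> - L" for x
  proof -
    have "d x > 0" using dL that by blast
    then have "norm (\<psi> x - x) = \<delta>" using dpos by (simp add: \<psi>_def d_def)
    then show ?thesis using assms(4) by (simp add: \<delta>_def)
  qed
  have clo: "closure T \<inter> L = {}"
  proof -
    have "closed {y. d y \<ge> \<delta>}"
      by (rule closed_Collect_le) (intro continuous_intros cont_d)+
    moreover have "T \<subseteq> {y. d y \<ge> \<delta>}" by (auto simp: T_def)
    ultimately have "closure T \<subseteq> {y. d y \<ge> \<delta>}" by (simp add: closure_minimal)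
    moreover have "x \<in> L \<Longrightarrow> d x = 0" for x using dL[of x] by (auto simp: d_def)
    ultimately show ?thesis using dpos by (smt (verit) disjoint_iff mem_Collect_eq subsetD)
  qed
  have TL: "T \<subseteq> - L"
  proof
    fix y assume "y \<in> T"
    then have "d y > 0" using dpos by (simp add: T_def)
    then show "y \<in> - L" using dL by blast
  qed
  show ?thesis
    apply (rule exI[of _ \<psi>], rule exI[of _ \<psi>'])
    unfolding img using homeo uc close clo TL by blast
qed

end
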